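(* Let $X$ be a set and let $\mathcal{L}$ be a nest on $X$. Then $\mathcal{L}$ is interlocking if and only if, for each $L \in \mathcal{L}$ such that $L$ is closed in the Alexandroff topology determined by $\triangleleft_{\mathcal{L}}$, the set $X-L$ is closed in the Alexandroff topology determined by $\triangleleft_{\mathcal{L}^c}$.
   Context: A nest on $X$ is a family $\mathcal{L}$ of subsets of $X$ such that for all $M,N\in\mathcal{L}$, either $M\subseteq N$ or $N\subseteq M$. For a family $\mathcal{S}$ of subsets of $X$, define the relation $x \triangleleft_{\mathcal{S}} y$ iff there exists $S\in\mathcal{S}$ with $x\in S$ and $y\notin S$. Let $\mathcal{L}^c=\{X-L : L\in\mathcal{L}\}$. A family $\mathcal{S}$ of subsets of $X$ is interlocking if for every $T\in\mathcal{S}$ with $T=\bigcap\{S : T\subseteq S,\ S\in\mathcal{S}-\{T\}\}$ one has $T=\bigcup\{S : S\subseteq T,\ S\in\mathcal{S}-\{T\}\}$. For a relation $\triangleleft$ on $X$ and $A\subseteq X$, let ${\uparrow}A=\{x\in X : \exists y\in A,\ y\triangleleft x\}$. The Alexandroff topology determined by $\triangleleft$ is the family $\{U\subseteq X : U={\uparrow}U\}$ (these are the open sets); a set is closed if its complement is open. *)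

theory Defs
  imports Main
begin

definition nest :: "'a set \<Rightarrow> 'a set set \<Rightarrow> bool" where
  "nest X \<L> \<longleftrightarrow> (\<forall>M\<in>\<L>. M \<subseteq> X) \<and> (\<forall>M\<in>\<L>. \<forall>N\<in>\<L>. M \<subseteq> N \<or> N \<subseteq> M)"

definition rel_of :: "'a set set \<Rightarrow> 'a \<Rightarrow> 'a \<Rightarrow> bool" where
  "rel_of \<S> x y \<longleftrightarrow> (\<exists>S\<in>\<S>. x \<in> S \<and> y \<notin> S)"

definition compl_fam :: "'a set \<Rightarrow> 'a set set \<Rightarrow> 'a set set" where
  "compl_fam X \<L> = (\<lambda>L. X - L) ` \<L>"

text \<open>Intersections are taken relative to X (empty intersection = X).\<close>
definition interlocking :: "'a set \<Rightarrow> 'a set set \<Rightarrow> bool" where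
  "interlocking X \<S> \<longleftrightarrow>
    (\<forall>T\<in>\<S>. T = X \<inter> \<Inter>{S. S \<in> \<S> - {T} \<and> T \<subseteq> S}
       \<longrightarrow> T = \<Union>{S. S \<in> \<S> - {T} \<and> S \<subseteq> T})"

definition up_set :: "'a set \<Rightarrow> ('a \<Rightarrow> 'a \<Rightarrow> bool) \<Rightarrow> 'a set \<Rightarrow> 'a set" where
  "up_set X R A = {x\<in>X. \<exists>y\<in>A. R y x}"

definition alex_open :: "'a set \<Rightarrow> ('a \<Rightarrow> 'a \<Rightarrow> bool) \<Rightarrow> 'a set \<Rightarrow> bool" where
  "alex_open X R U \<longleftrightarrow> U \<subseteq> X \<and> U = up_set X R U"

definition alex_closed :: "'a set \<Rightarrow> ('a \<Rightarrow> 'a \<Rightarrow> bool) \<Rightarrow> 'a set \<Rightarrow> bool" where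
  "alex_closed X R C \<longleftrightarrow> C \<subseteq> X \<and> alex_open X R (X - C)"

end

theory Submission
  imports Defs
begin

lemma closed_iff:
  assumes n: "nest X \<L>" and L: "L \<in> \<L>"
  shows "alex_closed X (rel_of \<L>) L \<longleftrightarrow> L = X \<inter> \<Inter>{S. S \<in> \<L> - {L} \<and> L \<subseteq> S}"
proof -
  have LX: "L \<subseteq> X" using n L unfolding nest_def by blast
  have cmp: "\<And>M. M \<in> \<L> \<Longrightarrow> M \<subseteq> L \<or> L \<subseteq> M" using n L unfolding nest_def by blast
  have sub: "\<And>M. M \<in> \<L> \<Longrightarrow> M \<subseteq> X" using n unfolding nest_def by blast
  show ?thesis
  proof
    assume c: "alex_closed X (rel_of \<L>) L"
    hence eq: "X - L = up_set X (rel_of \<L>) (X - L)" unfolding alex_closed_def alex_open_def by blast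
    show "L = X \<inter> \<Inter>{S. S \<in> \<L> - {L} \<and> L \<subseteq> S}"
    proof
      show "L \<subseteq> X \<inter> \<Inter>{S. S \<in> \<L> - {L} \<and> L \<subseteq> S}" using LX by blast
      show "X \<inter> \<Inter>{S. S \<in> \<L> - {L} \<and> L \<subseteq> S} \<subseteq> L"
      proof
        fix x assume x: "x \<in> X \<inter> \<Inter>{S. S \<in> \<L> - {L} \<and> L \<subseteq> S}"
        show "x \<in> L"
        proof (rule ccontr)
          assume "x \<notin> L"
          with x have "x \<in> up_set X (rel_of \<L>) (X - L)" using eq by blast
          then obtain y M where y: "y \<in> X - L" "M \<in> \<L>" "y \<in> M" "x \<notin> M"
            unfolding up_set_def rel_of_def by blast
          hence "M \<noteq> L" "L \<subseteq> M" using cmp[of M] by blast+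
          with x y show False by blast
        qed
      qed
    qed
  next
    assume e: "L = X \<inter> \<Inter>{S. S \<in> \<L> - {L} \<and> L \<subseteq> S}"
    have "X - L = up_set X (rel_of \<L>) (X - L)"
    proof
      show "up_set X (rel_of \<L>) (X - L) \<subseteq> X - L"
      proof
        fix x assume "x \<in> up_set X (rel_of \<L>) (X - L)"
        then obtain y M where y: "x \<in> X" "y \<in> X - L" "M \<in> \<L>" "y \<in> M" "x \<notin> M"
          unfolding up_set_def rel_of_def by blast
        hence "L \<subseteq> M" using cmp[of M] by blast
        with y show "x \<in> X - L" by blast
      qed
      show "X - L \<subseteq> up_set X (rel_of \<L>) (X - L)"
      proof
        fix x assume x: "x \<in> X - L"
        then obtain S where S: "S \<in> \<L>" "S \<noteq> L" "L \<subseteq> S" "x \<notin> S" using e by blast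
        then obtain y where y: "y \<in> S" "y \<notin> L" by blast
        hence "y \<in> X" using sub S by blast
        with x y S show "x \<in> up_set X (rel_of \<L>) (X - L)"
          unfolding up_set_def rel_of_def by blast
      qed
    qed
    thus "alex_closed X (rel_of \<L>) L" using LX unfolding alex_closed_def alex_open_def by blast
  qed
qed

lemma nest_compl: "nest X \<L> \<Longrightarrow> nest X (compl_fam X \<L>)"
  unfolding nest_def compl_fam_def by blast

theorem theorem3p4:
  fixes X :: "'a set" and \<L> :: "'a set set"
  assumes "nest X \<L>"
  shows "interlocking X \<L> \<longleftrightarrow>
    (\<forall>L\<in>\<L>. alex_closed X (rel_of \<L>) L \<longrightarrow>
       alex_closed X (rel_of (compl_fam X \<L>)) (X - L))"
proof -
  have sub: "\<And>M. M \<in> \<L> \<Longrightarrow> M \<subseteq> X" using assms unfolding nest_def by blast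
  have key: "(X - L = X \<inter> \<Inter>{S. S \<in> compl_fam X \<L> - {X - L} \<and> X - L \<subseteq> S})
      \<longleftrightarrow> L = \<Union>{S. S \<in> \<L> - {L} \<and> S \<subseteq> L}" if L: "L \<in> \<L>" for L
  proof
    assume a: "X - L = X \<inter> \<Inter>{S. S \<in> compl_fam X \<L> - {X - L} \<and> X - L \<subseteq> S}"
    show "L = \<Union>{S. S \<in> \<L> - {L} \<and> S \<subseteq> L}"
    proof
      show "\<Union>{S. S \<in> \<L> - {L} \<and> S \<subseteq> L} \<subseteq> L" by blast
      show "L \<subseteq> \<Union>{S. S \<in> \<L> - {L} \<and> S \<subseteq> L}"
      proof
        fix x assume x: "x \<in> L"
        hence "x \<notin> X \<inter> \<Inter>{S. S \<in> compl_fam X \<L> - {X - L} \<and> X - L \<subseteq> S}" using a by blast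
        moreover have "x \<in> X" using x sub L by blast
        ultimately obtain T where T: "T \<in> compl_fam X \<L>" "T \<noteq> X - L" "X - L \<subseteq> T" "x \<notin> T" by blast
        then obtain M where M: "M \<in> \<L>" "T = X - M" unfolding compl_fam_def by blast
        have "M \<noteq> L" using T M by blast
        moreover have "M \<subseteq> L" using T M sub[of M] by blast
        moreover have "x \<in> M" using T M \<open>x \<in> X\<close> by blast
        ultimately show "x \<in> \<Union>{S. S \<in> \<L> - {L} \<and> S \<subseteq> L}" using M by blast
      qed
    qed
  next
    assume a: "L = \<Union>{S. S \<in> \<L> - {L} \<and> S \<subseteq> L}"
    show "X - L = X \<inter> \<Inter>{S. S \<in> compl_fam X \<L> - {X - L} \<and> X - L \<subseteq> S}"
    proof
      show "X - L \<subseteq> X \<inter> \<Inter>{S. S \<in> compl_fam X \<L> - {X - L} \<and> X - L \<subseteq> S}" by blast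
      show "X \<inter> \<Inter>{S. S \<in> compl_fam X \<L> - {X - L} \<and> X - L \<subseteq> S} \<subseteq> X - L"
      proof
        fix x assume x: "x \<in> X \<inter> \<Inter>{S. S \<in> compl_fam X \<L> - {X - L} \<and> X - L \<subseteq> S}"
        show "x \<in> X - L"
        proof (rule ccontr)
          assume "x \<notin> X - L"
          hence "x \<in> L" using x by blast
          then obtain M where M: "M \<in> \<L>" "M \<noteq> L" "M \<subseteq> L" "x \<in> M" using a by blast
          have "X - M \<in> compl_fam X \<L>" using M unfolding compl_fam_def by blast
          moreover have "X - M \<noteq> X - L" using M sub[of M] sub[OF L] by blast
          moreover have "X - L \<subseteq> X - M" using M by blast
          ultimately have "x \<in> X - M" using x by blast
          with M show False by blast
        qed
      qed
    qed
  qed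
  have c2: "alex_closed X (rel_of (compl_fam X \<L>)) (X - L) \<longleftrightarrow> L = \<Union>{S. S \<in> \<L> - {L} \<and> S \<subseteq> L}"
    if L: "L \<in> \<L>" for L
  proof -
    have "X - L \<in> compl_fam X \<L>" using L unfolding compl_fam_def by blast
    hence "alex_closed X (rel_of (compl_fam X \<L>)) (X - L) \<longleftrightarrow>
      X - L = X \<inter> \<Inter>{S. S \<in> compl_fam X \<L> - {X - L} \<and> X - L \<subseteq> S}"
      by (rule closed_iff[OF nest_compl[OF assms]])
    thus ?thesis using key[OF L] by simp
  qed
  have "interlocking X \<L> \<longleftrightarrow> (\<forall>L\<in>\<L>. alex_closed X (rel_of \<L>) L \<longrightarrow> L = \<Union>{S. S \<in> \<L> - {L} \<and> S \<subseteq> L})"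
    unfolding interlocking_def using closed_iff[OF assms] by simp
  thus ?thesis using c2 by simp
qed

end
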